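(* Let $\alpha\ge1$, let $B\le B_a$ be positive integers, let $\ell$ and $I$ be integers with $0\le\ell\le B_a$ and $I\ge \ell$, and let $(w_k)_{k\le I}$ be real numbers with $w_k=0$ for $k\le 0$ and $0\le w_1\le w_2\le\cdots\le w_I$. For $0\le j\le I$ let $$\beta^{(j)}:=c\sum_{i=1}^{B_a}w_{j-B_a+i}\,E^{\alpha(B_a-i)/B_a},$$ and define $$\mathrm{PRD}_a:=\frac{1}{\alpha_B}\sum_{i=1}^{I-\ell}\left(w_i-\beta^{(i-1)}\right)+\sum_{i=I-\ell+1}^{I}w_i+(B_a-\ell)\beta^{(I)}.$$ Then $$\mathrm{PRD}_a\le\sum_{i=I-B_a+1}^{I-\ell}\phi_i w_i+\sum_{i=I-\ell+1}^{I}\psi_i w_i+w_{I-B_a}\,\Omega,$$ where $$\phi_i:=(B_a-\ell)\,c\,E^{\alpha(I-i)/B_a}+\frac{1}{\alpha_B}\cdot\frac{E^{\alpha}-E^{\alpha(I-\ell-i)/B_a}}{E^{\alpha}-1},\qquad \psi_i:=1+(B_a-\ell)\,c\,E^{\alpha(I-i)/B_a},$$ $$\Omega:=\frac{1}{\alpha_B}\cdot\frac{1}{E^{\alpha}-1}\left(\ell E^{\alpha}-\frac{E^{\alpha}-E^{\alpha(B_a-\ell)/B_a}}{E^{\alpha/B_a}-1}\right).$$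
   Context: Notation: $E:=(1+1/B_a)^{B_a}$, $c:=\frac{E^{\alpha/B_a}-1}{E^{\alpha}-1}$, $e_B:=(1+1/B)^B$ and $\alpha_B:=B(e_B^{\alpha/B}-1)$. *)

theory Defs
  imports Complex_Main
begin

definition E_const :: "nat \<Rightarrow> real" where
  "E_const Ba = (1 + 1 / real Ba) ^ Ba"

definition c_const :: "real \<Rightarrow> nat \<Rightarrow> real" where
  "c_const \<alpha> Ba = (E_const Ba powr (\<alpha> / real Ba) - 1) / (E_const Ba powr \<alpha> - 1)"

definition e_const :: "nat \<Rightarrow> real" where
  "e_const B = (1 + 1 / real B) ^ B"

definition alpha_B :: "real \<Rightarrow> nat \<Rightarrow> real" where
  "alpha_B \<alpha> B = real B * (e_const B powr (\<alpha> / real B) - 1)"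

definition beta :: "real \<Rightarrow> nat \<Rightarrow> (int \<Rightarrow> real) \<Rightarrow> int \<Rightarrow> real" where
  "beta \<alpha> Ba w j = c_const \<alpha> Ba *
     (\<Sum>i=1..int Ba. w (j - int Ba + i) * E_const Ba powr (\<alpha> * real_of_int (int Ba - i) / real Ba))"

definition PRD_a :: "real \<Rightarrow> nat \<Rightarrow> nat \<Rightarrow> int \<Rightarrow> int \<Rightarrow> (int \<Rightarrow> real) \<Rightarrow> real" where
  "PRD_a \<alpha> B Ba l I w =
     (1 / alpha_B \<alpha> B) * (\<Sum>i=1..I-l. (w i - beta \<alpha> Ba w (i - 1)))
     + (\<Sum>i=I-l+1..I. w i)
     + real_of_int (int Ba - l) * beta \<alpha> Ba w I"

definition phi_coef :: "real \<Rightarrow> nat \<Rightarrow> nat \<Rightarrow> int \<Rightarrow> int \<Rightarrow> int \<Rightarrow> real" where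
  "phi_coef \<alpha> B Ba l I i =
     real_of_int (int Ba - l) * c_const \<alpha> Ba * E_const Ba powr (\<alpha> * real_of_int (I - i) / real Ba)
     + (1 / alpha_B \<alpha> B) *
       ((E_const Ba powr \<alpha> - E_const Ba powr (\<alpha> * real_of_int (I - l - i) / real Ba))
        / (E_const Ba powr \<alpha> - 1))"

definition psi_coef :: "real \<Rightarrow> nat \<Rightarrow> int \<Rightarrow> int \<Rightarrow> int \<Rightarrow> real" where
  "psi_coef \<alpha> Ba l I i =
     1 + real_of_int (int Ba - l) * c_const \<alpha> Ba * E_const Ba powr (\<alpha> * real_of_int (I - i) / real Ba)"

definition Omega_const :: "real \<Rightarrow> nat \<Rightarrow> nat \<Rightarrow> int \<Rightarrow> real" where
  "Omega_const \<alpha> B Ba l =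
     (1 / alpha_B \<alpha> B) * (1 / (E_const Ba powr \<alpha> - 1)) *
     (real_of_int l * E_const Ba powr \<alpha>
      - (E_const Ba powr \<alpha> - E_const Ba powr (\<alpha> * real_of_int (int Ba - l) / real Ba))
        / (E_const Ba powr (\<alpha> / real Ba) - 1))"

end

theory Submission
  imports Defs
begin

lemma int_interval_Suc_top:
  fixes a b :: int
  assumes "a \<le> b + 1"
  shows "{a..b+1} = insert (b+1) {a..b}"
  using assms by auto

lemma core_identity:
  fixes q :: real and Ba :: nat and w :: "int \<Rightarrow> real"
  assumes Ba: "Ba \<ge> 1" and Q1: "q^Ba \<noteq> 1"
    and w0: "\<And>k. k \<le> 0 \<Longrightarrow> w k = 0"
  shows "(q^Ba - 1) * (\<Sum>i=1..int n. (w i - (q-1)/(q^Ba-1) * (\<Sum>m<Ba. w (i - 1 - int m) * q^m)))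
       = (\<Sum>m<Ba. w (int n - int m) * (q^Ba - q^m))"
proof (induction n)
  case 0
  then show ?case using w0 by simp
next
  case (Suc n)
  obtain b where b: "Ba = Suc b" using Ba by (cases Ba) auto
  define S where "S = (\<Sum>m<Ba. w (int n - int m) * q^m)"
  have L: "(\<Sum>i=1..int (Suc n). (w i - (q-1)/(q^Ba-1) * (\<Sum>m<Ba. w (i - 1 - int m) * q^m)))
     = (\<Sum>i=1..int n. (w i - (q-1)/(q^Ba-1) * (\<Sum>m<Ba. w (i - 1 - int m) * q^m)))
       + (w (int n + 1) - (q-1)/(q^Ba-1) * S)"
  proof -
    have "{1..int (Suc n)} = insert (int n + 1) {1..int n}" by auto
    then show ?thesis unfolding S_def by (simp add: add.commute)
  qed
  have R1: "(\<Sum>m<Ba. w (int (Suc n) - int m) * (q^Ba - q^m))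
      = w (int n + 1) * (q^Ba - 1) + (\<Sum>m<b. w (int n - int m) * (q^Ba - q^(Suc m)))"
    unfolding b by (subst sum.lessThan_Suc_shift) (simp add: algebra_simps)
  have R2: "(\<Sum>m<Ba. w (int n - int m) * (q^Ba - q^(Suc m)))
      = (\<Sum>m<b. w (int n - int m) * (q^Ba - q^(Suc m)))"
    unfolding b by simp
  have R3: "(\<Sum>m<Ba. w (int n - int m) * (q^Ba - q^(Suc m)))
      - (\<Sum>m<Ba. w (int n - int m) * (q^Ba - q^m)) = - (q-1) * S"
    unfolding S_def by (simp add: sum_subtractf[symmetric] sum_distrib_left algebra_simps)
  have "(q^Ba - 1) * ((w (int n + 1) - (q-1)/(q^Ba-1) * S))
        = (q^Ba - 1) * w (int n + 1) - (q-1) * S"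
    using Q1 by (simp add: field_simps)
  note E = this
  define A where "A = (\<Sum>i=1..int n. (w i - (q-1)/(q^Ba-1) * (\<Sum>m<Ba. w (i - 1 - int m) * q^m)))"
  define X where "X = (\<Sum>m<Ba. w (int n - int m) * (q^Ba - q^(Suc m)))"
  define Y where "Y = (\<Sum>m<b. w (int n - int m) * (q^Ba - q^(Suc m)))"
  define Z where "Z = (\<Sum>m<Ba. w (int n - int m) * (q^Ba - q^m))"
  have IH: "(q^Ba - 1) * A = Z" using Suc.IH unfolding A_def Z_def by simp
  have "(q^Ba - 1) * (A + (w (int n + 1) - (q-1)/(q^Ba-1) * S))
      = Z + (q^Ba - 1) * w (int n + 1) - (q-1) * S"
    using IH E by (simp add: distrib_left)
  also have "\<dots> = w (int n + 1) * (q^Ba - 1) + Y"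
    using R2 R3 unfolding X_def Y_def Z_def by (simp add: algebra_simps)
  finally show ?case using L R1 unfolding A_def Y_def by simp
qed

lemma sum_rev_int:
  fixes f :: "int \<Rightarrow> 'b::comm_monoid_add"
  shows "(\<Sum>i=a-int k+1..a. f i) = (\<Sum>m<k. f (a - int m))"
proof (induction k)
  case 0 then show ?case by simp
next
  case (Suc k)
  have "{a - int (Suc k) + 1..a} = insert (a - int k) {a - int k + 1..a}" by auto
  then show ?case using Suc by (simp add: add.commute)
qed

lemma geom_int:
  fixes q :: real
  shows "(q-1) * (\<Sum>m<L. q^(k+m)) = q^(k+L) - q^k"
proof (induction L)
  case 0 then show ?case by simp
next
  case (Suc L)
  then show ?case by (simp add: algebra_simps)
qed

lemma mono_w:
  fixes w :: "int \<Rightarrow> real"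
  assumes "\<And>k. 1 \<le> k \<Longrightarrow> k < I \<Longrightarrow> w k \<le> w (k + 1)"
  shows "1 \<le> a \<Longrightarrow> a + int d \<le> I \<Longrightarrow> w a \<le> w (a + int d)"
proof (induction d)
  case 0 then show ?case by simp
next
  case (Suc d)
  have "w a \<le> w (a + int d)" using Suc by simp
  also have "\<dots> \<le> w (a + int d + 1)" using assms[of "a + int d"] Suc.prems by simp
  finally show ?case by (simp add: ac_simps)
qed

lemma sum_split_nat:
  fixes f :: "nat \<Rightarrow> 'b::comm_monoid_add"
  shows "(\<Sum>m<L+k. f m) = (\<Sum>m<L. f m) + (\<Sum>m<k. f (L+m))"
  by (induction k) (simp_all add: ac_simps)

theorem lemmaA6:
  fixes \<alpha> :: real and B Ba :: nat and l I :: int and w :: "int \<Rightarrow> real"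
  assumes "\<alpha> \<ge> 1"
    and "0 < B" and "B \<le> Ba"
    and "0 \<le> l" and "l \<le> int Ba"
    and "I \<ge> l"
    and "\<And>k. k \<le> 0 \<Longrightarrow> w k = 0"
    and "1 \<le> I \<Longrightarrow> 0 \<le> w 1"
    and "\<And>k. 1 \<le> k \<Longrightarrow> k < I \<Longrightarrow> w k \<le> w (k + 1)"
  shows "PRD_a \<alpha> B Ba l I w \<le>
           (\<Sum>i=I-int Ba+1..I-l. phi_coef \<alpha> B Ba l I i * w i)
         + (\<Sum>i=I-l+1..I. psi_coef \<alpha> Ba l I i * w i)
         + w (I - int Ba) * Omega_const \<alpha> B Ba l"
proof -
  note al = assms(1) and w0 = assms(7) and w1 = assms(8) and wm = assms(9)
  have Ba1: "Ba \<ge> 1" using assms(2,3) by simp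
  define E where "E = E_const Ba"
  define q where "q = E powr (\<alpha> / real Ba)"
  define Q where "Q = q ^ Ba"
  define L where "L = nat l"
  define k where "k = Ba - L"
  define N where "N = I - l"
  define ib where "ib = 1 / alpha_B \<alpha> B"
  have lL: "l = int L" using assms(4) unfolding L_def by simp
  have LBa: "L \<le> Ba" using assms(5) lL by simp
  have BakL: "Ba = L + k" using LBa unfolding k_def by simp
  have rk: "real_of_int (int Ba - l) = real k" using LBa lL unfolding k_def by simp
  have E1: "E > 1" unfolding E_def E_const_def
    using Ba1 by (intro one_less_power) (auto simp: field_simps)
  have q1: "q > 1" unfolding q_def using E1 al Ba1 by (intro gr_one_powr) auto
  have Q1: "Q > 1" unfolding Q_def using q1 Ba1 by (intro one_less_power) auto
  have pw: "E powr (\<alpha> * real_of_int t / real Ba) = q ^ nat t" if "t \<ge> 0" for t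
  proof -
    have "E powr (\<alpha> * real_of_int t / real Ba) = (E powr (\<alpha> / real Ba)) powr real (nat t)"
      using that by (simp add: powr_powr)
    also have "\<dots> = q ^ nat t" unfolding q_def using E1 by (simp add: powr_realpow)
    finally show ?thesis .
  qed
  have EQ: "E powr \<alpha> = Q"
  proof -
    have "E powr \<alpha> = E powr (\<alpha> * real_of_int (int Ba) / real Ba)" using Ba1 by simp
    also have "\<dots> = Q" using pw[of "int Ba"] unfolding Q_def by simp
    finally show ?thesis .
  qed
  have cc: "c_const \<alpha> Ba = (q-1)/(Q-1)"
    unfolding c_const_def E_def[symmetric] q_def[symmetric] EQ ..
  have ib0: "ib \<ge> 0"
  proof -
    have "e_const B \<ge> 1" unfolding e_const_def by (intro one_le_power) auto
    then have "e_const B powr (\<alpha> / real B) \<ge> 1" using al by (intro ge_one_powr_ge_zero) auto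
    then show ?thesis unfolding ib_def alpha_B_def by simp
  qed
  have beta_eq: "beta \<alpha> Ba w j = (q-1)/(Q-1) * (\<Sum>m<Ba. w (j - int m) * q^m)" for j
  proof -
    have "(\<Sum>i=1..int Ba. w (j - int Ba + i) * E_const Ba powr (\<alpha> * real_of_int (int Ba - i) / real Ba))
        = (\<Sum>i=int Ba - int Ba+1..int Ba. w (j - int Ba + i) * E powr (\<alpha> * real_of_int (int Ba - i) / real Ba))"
      unfolding E_def by simp
    also have "\<dots> = (\<Sum>m<Ba. w (j - int Ba + (int Ba - int m)) * E powr (\<alpha> * real_of_int (int Ba - (int Ba - int m)) / real Ba))"
      by (rule sum_rev_int)
    also have "\<dots> = (\<Sum>m<Ba. w (j - int m) * q^m)"
    proof (intro sum.cong refl)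
      fix m assume "m \<in> {..<Ba}"
      have "E powr (\<alpha> * real_of_int (int m) / real Ba) = q ^ m" using pw[of "int m"] by simp
      then show "w (j - int Ba + (int Ba - int m)) * E powr (\<alpha> * real_of_int (int Ba - (int Ba - int m)) / real Ba) = w (j - int m) * q^m"
        by simp
    qed
    finally show ?thesis unfolding beta_def cc by simp
  qed
  define D where "D = (\<Sum>i=1..I-l. (w i - beta \<alpha> Ba w (i - 1)))"
  have N0: "N \<ge> 0" using assms(6) unfolding N_def by simp
  define n where "n = nat N"
  have nN: "int n = N" using N0 unfolding n_def by simp
  have "(Q - 1) * D = (\<Sum>m<Ba. w (N - int m) * (Q - q^m))"
  proof -
    have "D = (\<Sum>i=1..int n. (w i - (q-1)/(q^Ba-1) * (\<Sum>m<Ba. w (i - 1 - int m) * q^m)))"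
      unfolding D_def nN N_def[symmetric] beta_eq Q_def by simp
    then show ?thesis using core_identity[OF Ba1 _ w0, where q=q and n=n] Q1 unfolding Q_def nN by simp
  qed
  also have "\<dots> = (\<Sum>m<k. w (N - int m) * (Q - q^m)) + (\<Sum>m<L. w (N - int (k+m)) * (Q - q^(k+m)))"
    unfolding BakL by (subst add.commute) (rule sum_split_nat)
  finally have DQ: "(Q - 1) * D = (\<Sum>m<k. w (N - int m) * (Q - q^m)) + (\<Sum>m<L. w (N - int (k+m)) * (Q - q^(k+m)))" .
  have Nk: "N - int k = I - int Ba" unfolding N_def k_def using lL LBa by simp
  have T2: "(\<Sum>m<L. w (N - int (k+m)) * (Q - q^(k+m))) \<le> (\<Sum>m<L. w (I - int Ba) * (Q - q^(k+m)))"
  proof (rule sum_mono)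
    fix m assume mL: "m \<in> {..<L}"
    have qle: "q^(k+m) \<le> Q" unfolding Q_def using q1 mL BakL by (intro power_increasing) auto
    have "w (I - int Ba - int m) \<le> w (I - int Ba)"
    proof (cases "I - int Ba \<le> 0")
      case True then show ?thesis using w0 by simp
    next
      case False
      have I1: "1 \<le> I" using False by simp
      show ?thesis
      proof (cases "I - int Ba - int m \<le> 0")
        case True
        have "w 1 \<le> w (1 + int (nat (I - int Ba - 1)))"
          using False Ba1 by (intro mono_w[where I=I and w=w, OF wm]) auto
        then show ?thesis using True w0 w1[OF I1] False by simp
      next
        case False
        have "w (I - int Ba - int m) \<le> w (I - int Ba - int m + int m)"
          using False Ba1 by (intro mono_w[where I=I and w=w, OF wm]) auto
        then show ?thesis by simp
      qed
    qed
    moreover have "N - int (k+m) = I - int Ba - int m" using Nk by simp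
    ultimately have "w (N - int (k+m)) \<le> w (I - int Ba)" by metis
    then show "w (N - int (k+m)) * (Q - q^(k+m)) \<le> w (I - int Ba) * (Q - q^(k+m))"
      using qle by (intro mult_right_mono) auto
  qed
  have G: "(\<Sum>m<L. (Q - q^(k+m))) = real L * Q - (Q - q^k)/(q-1)"
  proof -
    have "(q-1) * (\<Sum>m<L. q^(k+m)) = Q - q^k" using geom_int[where q=q and L=L and k=k] BakL unfolding Q_def by (simp add: add.commute)
    then have "(\<Sum>m<L. q^(k+m)) = (Q - q^k)/(q-1)" using q1 by (simp add: field_simps)
    then show ?thesis by (simp add: sum_subtractf)
  qed
  define c where "c = (q-1)/(Q-1)"
  define T1 where "T1 = (\<Sum>m<k. w (N - int m) * (Q - q^m))"
  define T2 where "T2 = (\<Sum>m<L. w (N - int (k+m)) * (Q - q^(k+m)))"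
  define G' where "G' = real L * Q - (Q - q^k)/(q-1)"
  define W where "W = w (I - int Ba)"
  define A0 where "A0 = (\<Sum>m<L. w (I - int m))"
  define A1 where "A1 = (\<Sum>m<L. w (I - int m) * q^m)"
  define A2 where "A2 = (\<Sum>m<k. w (N - int m) * q^(L+m))"
  have T2le: "T2 \<le> W * G'"
    using T2 G unfolding T2_def W_def G'_def by (simp add: sum_distrib_left[symmetric])
  have Dv: "D = (T1 + T2) / (Q - 1)" using DQ Q1 unfolding T1_def T2_def by (simp add: field_simps)
  have NI: "N - int m = I - int (L + m)" for m unfolding N_def lL by simp
  have betaI: "beta \<alpha> Ba w I = c * (A1 + A2)"
  proof -
    have "(\<Sum>m<Ba. w (I - int m) * q^m) = A1 + (\<Sum>m<k. w (I - int (L+m)) * q^(L+m))"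
      unfolding BakL A1_def by (rule sum_split_nat)
    then show ?thesis unfolding beta_eq c_def A2_def NI by simp
  qed
  have PRD: "PRD_a \<alpha> B Ba l I w = ib * D + A0 + real k * c * (A1 + A2)"
  proof -
    have "(\<Sum>i=I-l+1..I. w i) = (\<Sum>i=I-int L+1..I. w i)" using lL by simp
    also have "\<dots> = A0" unfolding A0_def by (rule sum_rev_int)
    finally show ?thesis unfolding PRD_a_def ib_def[symmetric] D_def[symmetric] betaI rk by simp
  qed
  have S1: "(\<Sum>i=I-int Ba+1..I-l. phi_coef \<alpha> B Ba l I i * w i)
      = (\<Sum>m<k. (real k * c * q^(L+m) + ib * ((Q - q^m)/(Q-1))) * w (N - int m))"
  proof -
    have "(\<Sum>i=I-int Ba+1..I-l. phi_coef \<alpha> B Ba l I i * w i)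
        = (\<Sum>i=N-int k+1..N. phi_coef \<alpha> B Ba l I i * w i)" by (simp only: Nk N_def[symmetric])
    also have "\<dots> = (\<Sum>m<k. phi_coef \<alpha> B Ba l I (N - int m) * w (N - int m))" by (rule sum_rev_int)
    also have "\<dots> = (\<Sum>m<k. (real k * c * q^(L+m) + ib * ((Q - q^m)/(Q-1))) * w (N - int m))"
    proof (intro sum.cong refl)
      fix m assume "m \<in> {..<k}"
      have a: "E powr (\<alpha> * real_of_int (I - (N - int m)) / real Ba) = q^(L+m)"
      proof -
        have e: "I - (N - int m) = int (L+m)" by (simp add: NI)
        show ?thesis unfolding e using pw[of "int (L+m)", unfolded nat_int] by simp
      qed
      have b: "E powr (\<alpha> * real_of_int (I - l - (N - int m)) / real Ba) = q^m"
        using pw[of "int m"] unfolding N_def by simp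
      show "phi_coef \<alpha> B Ba l I (N - int m) * w (N - int m) = (real k * c * q^(L+m) + ib * ((Q - q^m)/(Q-1))) * w (N - int m)"
        unfolding phi_coef_def rk cc E_def[symmetric] a b EQ ib_def c_def by simp
    qed
    finally show ?thesis .
  qed
  have S2: "(\<Sum>i=I-l+1..I. psi_coef \<alpha> Ba l I i * w i)
      = (\<Sum>m<L. (1 + real k * c * q^m) * w (I - int m))"
  proof -
    have "(\<Sum>i=I-l+1..I. psi_coef \<alpha> Ba l I i * w i)
        = (\<Sum>i=I-int L+1..I. psi_coef \<alpha> Ba l I i * w i)" using lL by simp
    also have "\<dots> = (\<Sum>m<L. psi_coef \<alpha> Ba l I (I - int m) * w (I - int m))" by (rule sum_rev_int)
    also have "\<dots> = (\<Sum>m<L. (1 + real k * c * q^m) * w (I - int m))"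
    proof (intro sum.cong refl)
      fix m assume "m \<in> {..<L}"
      have a: "E powr (\<alpha> * real_of_int (I - (I - int m)) / real Ba) = q^m"
        using pw[of "int m"] by simp
      show "psi_coef \<alpha> Ba l I (I - int m) * w (I - int m) = (1 + real k * c * q^m) * w (I - int m)"
        unfolding psi_coef_def rk cc E_def[symmetric] a c_def by simp
    qed
    finally show ?thesis .
  qed
  have Om: "Omega_const \<alpha> B Ba l = ib / (Q - 1) * G'"
  proof -
    have a: "E powr (\<alpha> * real_of_int (int Ba - l) / real Ba) = q^k"
      using pw[of "int k"] rk by simp
    show ?thesis unfolding Omega_const_def E_def[symmetric] a EQ q_def[symmetric] ib_def[symmetric] G'_def
      by (simp add: lL)
  qed
  have S1': "(\<Sum>m<k. (real k * c * q^(L+m) + ib * ((Q - q^m)/(Q-1))) * w (N - int m))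
      = real k * c * A2 + ib / (Q - 1) * T1"
  proof -
    have "(\<Sum>m<k. (real k * c * q^(L+m) + ib * ((Q - q^m)/(Q-1))) * w (N - int m))
        = (\<Sum>m<k. real k * c * (w (N - int m) * q^(L+m)) + ib / (Q - 1) * (w (N - int m) * (Q - q^m)))"
      by (intro sum.cong refl) (simp add: field_simps)
    also have "\<dots> = real k * c * A2 + ib / (Q - 1) * T1"
      unfolding A2_def T1_def sum.distrib sum_distrib_left ..
    finally show ?thesis .
  qed
  have S2': "(\<Sum>m<L. (1 + real k * c * q^m) * w (I - int m)) = A0 + real k * c * A1"
    unfolding A0_def A1_def
    by (simp add: sum.distrib sum_distrib_left algebra_simps)
  have key: "ib * D \<le> ib / (Q - 1) * T1 + W * (ib / (Q - 1) * G')"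
  proof -
    have "ib * D = ib / (Q - 1) * T1 + ib / (Q - 1) * T2" unfolding Dv by (simp add: add_divide_distrib algebra_simps)
    also have "\<dots> \<le> ib / (Q - 1) * T1 + ib / (Q - 1) * (W * G')"
      using T2le ib0 Q1 by (intro add_left_mono mult_left_mono) auto
    finally show ?thesis by (simp add: algebra_simps)
  qed
  show ?thesis unfolding PRD S1 S2 S1' S2' Om W_def[symmetric] using key by (simp add: algebra_simps)

qed

end
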